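(* Let $(N,+,* )$ be a planar nearring presented by $(\Phi,R,M)$, and let $d\in D(N)$ be nonzero and not a zero multiplier, written $d=r_d\phi_d$ with $r_d\in R\setminus M$, $\phi_d\in\Phi$. Then $\{\phi\in\Phi : r_d\phi\in D(N)\}$ is a subgroup of $\Phi$, and it contains $Z(\Phi)$.
   Context: A (right) nearring $(N,+,* )$ is a set with a group $(N,+)$ (identity $0$, not necessarily abelian), a semigroup $(N,* )$, and right distributivity $(a+b)*c=a*c+b*c$ for all $a,b,c$. $N$ is planar if the relation $a\cong b$ ($x*a=x*b$ for all $x$) has at least $3$ classes and for all $a,b,c$ with $a\not\cong b$ the equation $x*a=x*b+c$ has a unique solution. Every planar nearring arises as follows, and we always consider it so presented. $\Phi\le \mathrm{Aut}(N,+)$ acts on the right, is fixed point free (for $\phi\ne\mathrm{id}$, $n\phi=n$ iff $n=0$), and $n\mapsto -n+n\phi$ is bijective for each $\phi\ne\mathrm{id}$. $R$ is a set of representatives of the $\Phi$-orbits of $N\setminus\{0\}$ and $M\subseteq R$. Each $a\ne0$ is uniquely $a=r_a\phi_a$ with $r_a\in R$, $\phi_a\in\Phi$. Multiplication: $a*b=0$ if $b=0$ or $r_b\in M$, else $a*b=a\phi_b$ (and $0*b=0$). The zero multipliers are the elements of $M\Phi\cup\{0\}$, i.e. those $n$ with $x*n=0$ for all $x$. $D(N)=\{n: n*(a+b)=n*a+n*b\ \forall a,b\}$. $Z(\Phi)$ is the centre of $\Phi$. *)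

theory Defs
  imports Main
begin

text \<open>The additive group (N,+) is the whole type 'a (class group_add, not necessarily
abelian). Automorphisms act on the right: n\<phi> is written \<phi> n.\<close>

definition is_aut :: "('a::group_add \<Rightarrow> 'a) \<Rightarrow> bool" where
  "is_aut f \<longleftrightarrow> bij f \<and> (\<forall>a b. f (a + b) = f a + f b)"

definition aut_subgroup :: "('a::group_add \<Rightarrow> 'a) set \<Rightarrow> bool" where
  "aut_subgroup Phi \<longleftrightarrow> (\<forall>f\<in>Phi. is_aut f) \<and> id \<in> Phi \<and>
     (\<forall>f\<in>Phi. \<forall>g\<in>Phi. f \<circ> g \<in> Phi) \<and> (\<forall>f\<in>Phi. inv f \<in> Phi)"

definition is_subgroup_of :: "('a \<Rightarrow> 'a) set \<Rightarrow> ('a \<Rightarrow> 'a) set \<Rightarrow> bool" where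
  "is_subgroup_of S Phi \<longleftrightarrow> S \<subseteq> Phi \<and> id \<in> S \<and>
     (\<forall>f\<in>S. \<forall>g\<in>S. f \<circ> g \<in> S) \<and> (\<forall>f\<in>S. inv f \<in> S)"

definition centre :: "('a \<Rightarrow> 'a) set \<Rightarrow> ('a \<Rightarrow> 'a) set" where
  "centre Phi = {f\<in>Phi. \<forall>g\<in>Phi. f \<circ> g = g \<circ> f}"

definition ferrero_data :: "('a::group_add \<Rightarrow> 'a) set \<Rightarrow> 'a set \<Rightarrow> 'a set \<Rightarrow> bool" where
  "ferrero_data Phi R M \<longleftrightarrow>
     aut_subgroup Phi \<and>
     (\<forall>f\<in>Phi. f \<noteq> id \<longrightarrow> (\<forall>n. f n = n \<longleftrightarrow> n = 0)) \<and>
     (\<forall>f\<in>Phi. f \<noteq> id \<longrightarrow> bij (\<lambda>n. - n + f n)) \<and>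
     R \<subseteq> - {0} \<and>
     (\<forall>a. a \<noteq> 0 \<longrightarrow> (\<exists>!r. r \<in> R \<and> (\<exists>f\<in>Phi. a = f r))) \<and>
     M \<subseteq> R"

text \<open>r_a and \<phi>_a for a \<noteq> 0 with a = r_a \<phi>_a.\<close>
definition rep :: "('a \<Rightarrow> 'a) set \<Rightarrow> 'a set \<Rightarrow> 'a \<Rightarrow> 'a" where
  "rep Phi R a = (THE r. r \<in> R \<and> (\<exists>f\<in>Phi. a = f r))"

definition phi_of :: "('a \<Rightarrow> 'a) set \<Rightarrow> 'a set \<Rightarrow> 'a \<Rightarrow> ('a \<Rightarrow> 'a)" where
  "phi_of Phi R a = (THE f. f \<in> Phi \<and> a = f (rep Phi R a))"

definition pmult :: "('a::group_add \<Rightarrow> 'a) set \<Rightarrow> 'a set \<Rightarrow> 'a set \<Rightarrow> 'a \<Rightarrow> 'a \<Rightarrow> 'a" where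
  "pmult Phi R M a b =
     (if a = 0 \<or> b = 0 \<or> rep Phi R b \<in> M then 0 else phi_of Phi R b a)"

definition is_nearring_mult :: "('a::group_add \<Rightarrow> 'a \<Rightarrow> 'a) \<Rightarrow> bool" where
  "is_nearring_mult m \<longleftrightarrow> (\<forall>a b c. m (m a b) c = m a (m b c)) \<and>
     (\<forall>a b c. m (a + b) c = m a c + m b c)"

definition mcong :: "('a \<Rightarrow> 'a \<Rightarrow> 'a) \<Rightarrow> 'a \<Rightarrow> 'a \<Rightarrow> bool" where
  "mcong m a b \<longleftrightarrow> (\<forall>x. m x a = m x b)"

definition is_planar :: "('a::group_add \<Rightarrow> 'a \<Rightarrow> 'a) \<Rightarrow> bool" where
  "is_planar m \<longleftrightarrow> is_nearring_mult m \<and>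
     (\<exists>a b c. \<not> mcong m a b \<and> \<not> mcong m a c \<and> \<not> mcong m b c) \<and>
     (\<forall>a b c. \<not> mcong m a b \<longrightarrow> (\<exists>!x. m x a = m x b + c))"

definition distrib_elems :: "('a::group_add \<Rightarrow> 'a \<Rightarrow> 'a) \<Rightarrow> 'a set" where
  "distrib_elems m = {n. \<forall>a b. m n (a + b) = m n a + m n b}"

definition zero_multiplier :: "('a::group_add \<Rightarrow> 'a \<Rightarrow> 'a) \<Rightarrow> 'a \<Rightarrow> bool" where
  "zero_multiplier m n \<longleftrightarrow> (\<forall>x. m x n = 0)"

end

theory Submission
  imports Defs
begin

lemma fd_aut:
  assumes "ferrero_data Phi R M" "f \<in> Phi"
  shows "bij f" "\<And>a b. f (a + b) = f a + f b" "f 0 = 0" "inv f \<in> Phi"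
    "\<And>x. f (inv f x) = x" "\<And>x. inv f (f x) = x" "\<And>x. f x = 0 \<longleftrightarrow> x = 0"
proof -
  have as0: "aut_subgroup Phi" using assms(1) by (simp add: ferrero_data_def)
  have a: "is_aut f" using as0 assms(2) unfolding aut_subgroup_def by simp
  show b: "bij f" using a unfolding is_aut_def by simp
  show add: "\<And>a b. f (a + b) = f a + f b" using a unfolding is_aut_def by simp
  show z: "f 0 = 0" using add[of 0 0] by (metis add.right_neutral add_left_cancel)
  have as: "aut_subgroup Phi" using assms(1) by (simp add: ferrero_data_def)
  show "inv f \<in> Phi" using as assms(2) unfolding aut_subgroup_def by simp
  show "\<And>x. f (inv f x) = x" using b by (simp add: bij_is_surj surj_f_inv_f)
  show i: "\<And>x. inv f (f x) = x" using b by (simp add: bij_is_inj)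
  show "\<And>x. f x = 0 \<longleftrightarrow> x = 0" using z b by (metis bij_is_inj injD)
qed

lemma fd_comp:
  assumes "ferrero_data Phi R M" "f \<in> Phi" "g \<in> Phi"
  shows "f \<circ> g \<in> Phi"
proof -
  have "aut_subgroup Phi" using assms(1) by (simp add: ferrero_data_def)
  thus ?thesis using assms(2,3) unfolding aut_subgroup_def by simp
qed

lemma fd_fp: "ferrero_data Phi R M \<Longrightarrow> f \<in> Phi \<Longrightarrow> f \<noteq> id \<Longrightarrow> f n = n \<longleftrightarrow> n = 0"
  unfolding ferrero_data_def by (elim conjE) (drule bspec, assumption, blast)

lemma fd_R0: "ferrero_data Phi R M \<Longrightarrow> r \<in> R \<Longrightarrow> r \<noteq> 0"
  unfolding ferrero_data_def by (elim conjE) blast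

lemma fd_orb: "ferrero_data Phi R M \<Longrightarrow> a \<noteq> 0 \<Longrightarrow> \<exists>!r. r \<in> R \<and> (\<exists>f\<in>Phi. a = f r)"
  unfolding ferrero_data_def by (elim conjE) blast

lemma fd_id: "ferrero_data Phi R M \<Longrightarrow> id \<in> Phi"
  by (simp add: ferrero_data_def aut_subgroup_def)

lemma fd_unique:
  assumes F: "ferrero_data Phi R M" and f: "f \<in> Phi" and g: "g \<in> Phi" and r0: "r \<noteq> 0" and e: "f r = g r"
  shows "f = g"
proof -
  have h: "inv g \<circ> f \<in> Phi" using fd_comp[OF F fd_aut(4)[OF F g] f] .
  have "(inv g \<circ> f) r = r" using e fd_aut(6)[OF F g] by simp
  hence "inv g \<circ> f = id" using fd_fp[OF F h] r0 by blast
  hence "g \<circ> (inv g \<circ> f) = g" by simp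
  thus ?thesis using fd_aut(5)[OF F g] by (simp add: comp_def fun_eq_iff)
qed

lemma fd_rep_phi:
  assumes F: "ferrero_data Phi R M" and r: "r \<in> R" and g: "g \<in> Phi"
  shows "rep Phi R (g r) = r" "phi_of Phi R (g r) = g"
proof -
  have r0: "r \<noteq> 0" using fd_R0[OF F r(1)] .
  hence gr0: "g r \<noteq> 0" using fd_aut(7)[OF F g] by simp
  have ex: "\<exists>!s. s \<in> R \<and> (\<exists>f\<in>Phi. g r = f s)" using fd_orb[OF F gr0] .
  show 1: "rep Phi R (g r) = r" unfolding rep_def
    by (rule the1_equality[OF ex]) (use r g in blast)
  show "phi_of Phi R (g r) = g" unfolding phi_of_def 1
  proof (rule the_equality)
    show "g \<in> Phi \<and> g r = g r" using g by simp
    fix f assume "f \<in> Phi \<and> g r = f r"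
    thus "f = g" using fd_unique[OF F _ g r0] by metis
  qed
qed

lemma fd_rep_of:
  assumes F: "ferrero_data Phi R M" and b: "b \<noteq> 0"
  shows "rep Phi R b \<in> R" "phi_of Phi R b \<in> Phi" "b = phi_of Phi R b (rep Phi R b)"
proof -
  obtain s f where s: "s \<in> R" "f \<in> Phi" "b = f s" using fd_orb[OF F b] by blast
  show "rep Phi R b \<in> R" "phi_of Phi R b \<in> Phi" "b = phi_of Phi R b (rep Phi R b)"
    using fd_rep_phi[OF F s(1,2)] s by auto
qed

lemma pmult_orb:
  assumes F: "ferrero_data Phi R M" and r: "r \<in> R" "r \<notin> M" and g: "g \<in> Phi"
  shows "pmult Phi R M x (g r) = g x"
proof -
  have r0: "r \<noteq> 0" using fd_R0[OF F r(1)] .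
  hence gr0: "g r \<noteq> 0" using fd_aut(7)[OF F g] by simp
  show ?thesis unfolding pmult_def using fd_rep_phi[OF F r(1) g] gr0 r fd_aut(3)[OF F g] by auto
qed

lemma pmult_gen:
  assumes F: "ferrero_data Phi R M"
  shows "pmult Phi R M x b = (if b = 0 \<or> rep Phi R b \<in> M then 0 else phi_of Phi R b x)"
  unfolding pmult_def using fd_aut(3)[OF F fd_rep_of(2)[OF F]] by auto

lemma range_orb:
  assumes F: "ferrero_data Phi R M" and r: "r \<in> R" and g: "g \<in> Phi"
  shows "pmult Phi R M (g r) b = 0 \<or> (\<exists>h\<in>Phi. pmult Phi R M (g r) b = h r)"
proof (cases "b = 0 \<or> rep Phi R b \<in> M")
  case True thus ?thesis by (simp add: pmult_gen[OF F])
next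
  case False
  hence "pmult Phi R M (g r) b = (phi_of Phi R b \<circ> g) r" by (simp add: pmult_gen[OF F])
  moreover have "phi_of Phi R b \<circ> g \<in> Phi" using fd_comp[OF F fd_rep_of(2)[OF F] g] False by blast
  ultimately show ?thesis by blast
qed

lemma key:
  assumes F: "ferrero_data Phi R M" and r: "r \<in> R" "r \<notin> M" and f: "f \<in> Phi" and g: "g \<in> Phi"
    and Dy: "f r \<in> distrib_elems (pmult Phi R M)"
    and comp: "\<And>a b. pmult Phi R M (f r) (pmult Phi R M (g r) (a + b))
       = pmult Phi R M (f r) (pmult Phi R M (g r) a) + pmult Phi R M (f r) (pmult Phi R M (g r) b)"
  shows "g r \<in> distrib_elems (pmult Phi R M)"
proof -
  let ?L = "pmult Phi R M"
  define H where "H = {0} \<union> {h r | h. h \<in> Phi}"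
  have r0: "r \<noteq> 0" using fd_R0[OF F r(1)] .
  have fr0: "f r \<noteq> 0" using fd_aut(7)[OF F f] r0 by simp
  have addy: "\<And>a b. ?L (f r) (a + b) = ?L (f r) a + ?L (f r) b"
    using Dy unfolding distrib_elems_def by blast
  have rz: "\<And>b. ?L (g r) b \<in> H" using range_orb[OF F r(1) g] unfolding H_def by blast
  have ry: "\<And>b. ?L (f r) b \<in> H" using range_orb[OF F r(1) f] unfolding H_def by blast
  have Hsub: "\<And>u. u \<in> H \<Longrightarrow> \<exists>v. u = ?L (f r) v"
  proof -
    fix u assume "u \<in> H"
    then consider "u = 0" | h where "h \<in> Phi" "u = h r" unfolding H_def by blast
    thus "\<exists>v. u = ?L (f r) v"
    proof cases
      case 1 thus ?thesis by (metis pmult_def)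
    next
      case 2
      have hi: "h \<circ> inv f \<in> Phi" using fd_comp[OF F 2(1) fd_aut(4)[OF F f]] .
      have "?L (f r) ((h \<circ> inv f) r) = h (inv f (f r))"
        using pmult_orb[OF F r hi] by simp
      thus ?thesis using 2 fd_aut(6)[OF F f] by metis
    qed
  qed
  have Lyval: "\<And>h. h \<in> Phi \<Longrightarrow> ?L (h r) (f r) = f (h r)"
    using pmult_orb[OF F r f] by blast
  have Lyh: "\<And>h. h \<in> Phi \<Longrightarrow> ?L (f r) (h r) = h (f r)"
    using pmult_orb[OF F r] by blast
  have inj: "\<And>u v. u \<in> H \<Longrightarrow> v \<in> H \<Longrightarrow> ?L (f r) u = ?L (f r) v \<Longrightarrow> u = v"
  proof -
    fix u v assume u: "u \<in> H" and v: "v \<in> H" and e: "?L (f r) u = ?L (f r) v"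
    have nz: "\<And>h. h \<in> Phi \<Longrightarrow> ?L (f r) (h r) \<noteq> 0"
      using Lyh fd_aut(7)[OF F] fr0 by metis
    have z: "?L (f r) 0 = 0" by (simp add: pmult_def)
    show "u = v"
    proof (cases "u = 0")
      case True
      thus ?thesis using v e nz z unfolding H_def by force
    next
      case False
      then obtain h where h: "h \<in> Phi" "u = h r" using u unfolding H_def by blast
      have "v \<noteq> 0" using e nz z h by metis
      then obtain h' where h': "h' \<in> Phi" "v = h' r" using v unfolding H_def by blast
      have "h (f r) = h' (f r)" using e h h' Lyh by metis
      hence "h = h'" using fd_unique[OF F h(1) h'(1) fr0] by blast
      thus ?thesis using h h' by simp
    qed
  qed
  show ?thesis unfolding distrib_elems_def
  proof (intro CollectI allI)
    fix a b
    obtain u where u: "?L (g r) a = ?L (f r) u" using Hsub rz by blast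
    obtain v where v: "?L (g r) b = ?L (f r) v" using Hsub rz by blast
    have sH: "?L (g r) a + ?L (g r) b \<in> H" using u v addy ry by metis
    have "?L (f r) (?L (g r) (a + b)) = ?L (f r) (?L (g r) a + ?L (g r) b)"
      using comp addy by metis
    thus "?L (g r) (a + b) = ?L (g r) a + ?L (g r) b" using inj rz sH by blast
  qed
qed

theorem mainTheorem2:
  fixes Phi :: "('a::group_add \<Rightarrow> 'a) set" and R M :: "'a set" and d :: 'a
  assumes "ferrero_data Phi R M"
    and "is_planar (pmult Phi R M)"
    and "d \<in> distrib_elems (pmult Phi R M)"
    and "d \<noteq> 0"
    and "\<not> zero_multiplier (pmult Phi R M) d"
  shows "is_subgroup_of {f \<in> Phi. f (rep Phi R d) \<in> distrib_elems (pmult Phi R M)} Phi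
         \<and> centre Phi \<subseteq> {f \<in> Phi. f (rep Phi R d) \<in> distrib_elems (pmult Phi R M)}"
proof -
  note F = assms(1)
  let ?L = "pmult Phi R M"
  let ?D = "distrib_elems (pmult Phi R M)"
  define r where "r = rep Phi R d"
  define pd where "pd = phi_of Phi R d"
  have rR: "r \<in> R" and pd: "pd \<in> Phi" and dd: "d = pd r"
    using fd_rep_of[OF F assms(4)] unfolding r_def pd_def by auto
  have rM: "r \<notin> M" using assms(5) unfolding zero_multiplier_def pmult_def r_def by auto
  note rr = rR rM
  have idP: "id \<in> Phi" using fd_id[OF F] .
  have assoc: "\<And>a b c. ?L (?L a b) c = ?L a (?L b c)"
    using assms(2) unfolding is_planar_def is_nearring_mult_def by blast
  have prod: "\<And>f g. f \<in> Phi \<Longrightarrow> g \<in> Phi \<Longrightarrow> ?L (g r) (f r) = (f \<circ> g) r"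
    using pmult_orb[OF F rr] by simp
  have addD: "\<And>x a b. x \<in> ?D \<Longrightarrow> ?L x (a + b) = ?L x a + ?L x b"
    unfolding distrib_elems_def by blast
  have r_D: "r \<in> ?D"
  proof -
    have "id r \<in> ?D"
    proof (rule key[OF F rr pd idP])
      show "pd r \<in> ?D" using assms(3) dd by simp
      fix a b
      have e: "\<And>c. ?L (pd r) (?L (id r) c) = ?L (pd r) c"
      proof -
        fix c
        have e0: "?L (pd r) (id r) = pd r" using prod[OF idP pd] by simp
        show "?L (pd r) (?L (id r) c) = ?L (pd r) c" using assoc[of "pd r" "id r" c] e0 by simp
      qed
      show "?L (pd r) (?L (id r) (a + b)) = ?L (pd r) (?L (id r) a) + ?L (pd r) (?L (id r) b)"
        unfolding e using addD assms(3) dd by metis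
    qed
    thus ?thesis by simp
  qed
  have sub: "is_subgroup_of {f \<in> Phi. f r \<in> ?D} Phi"
    unfolding is_subgroup_of_def
  proof (intro conjI ballI)
    show "{f \<in> Phi. f r \<in> ?D} \<subseteq> Phi" by blast
    show "id \<in> {f \<in> Phi. f r \<in> ?D}" using idP r_D by simp
  next
    fix f g assume f: "f \<in> {f \<in> Phi. f r \<in> ?D}" and g: "g \<in> {f \<in> Phi. f r \<in> ?D}"
    have c: "f \<circ> g \<in> Phi" using fd_comp[OF F] f g by blast
    have "(f \<circ> g) r \<in> ?D" unfolding distrib_elems_def
    proof (intro CollectI allI)
      fix a b
      have e: "\<And>c. ?L ((f \<circ> g) r) c = ?L (g r) (?L (f r) c)"
      proof -
        fix c
        have e0: "?L (g r) (f r) = (f \<circ> g) r" using prod f g by blast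
        show "?L ((f \<circ> g) r) c = ?L (g r) (?L (f r) c)" using assoc[of "g r" "f r" c] e0 by simp
      qed
      show "?L ((f \<circ> g) r) (a + b) = ?L ((f \<circ> g) r) a + ?L ((f \<circ> g) r) b"
        unfolding e using addD f g by simp
    qed
    thus "f \<circ> g \<in> {f \<in> Phi. f r \<in> ?D}" using c by blast
  next
    fix f assume f: "f \<in> {f \<in> Phi. f r \<in> ?D}"
    have fP: "f \<in> Phi" and fD: "f r \<in> ?D" using f by auto
    have iP: "inv f \<in> Phi" using fd_aut(4)[OF F fP] .
    have "inv f r \<in> ?D"
    proof (rule key[OF F rr fP iP fD])
      fix a b
      have "?L (f r) (inv f r) = (inv f \<circ> f) r" using prod[OF iP fP] .
      hence e0: "?L (f r) (inv f r) = r" using fd_aut(6)[OF F fP] by simp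
      have e: "\<And>c. ?L (f r) (?L (inv f r) c) = ?L r c"
        using assoc[of "f r" "inv f r"] e0 by simp
      show "?L (f r) (?L (inv f r) (a + b)) = ?L (f r) (?L (inv f r) a) + ?L (f r) (?L (inv f r) b)"
        unfolding e using addD r_D by metis
    qed
    thus "inv f \<in> {f \<in> Phi. f r \<in> ?D}" using iP by blast
  qed
  have cen: "centre Phi \<subseteq> {f \<in> Phi. f r \<in> ?D}"
  proof
    fix c assume c: "c \<in> centre Phi"
    have cP: "c \<in> Phi" using c unfolding centre_def by blast
    have "c r \<in> ?D" unfolding distrib_elems_def
    proof (intro CollectI allI)
      have e: "\<And>x. ?L (c r) x = c (?L r x)"
      proof -
        fix x
        show "?L (c r) x = c (?L r x)"
        proof (cases "x = 0 \<or> rep Phi R x \<in> M")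
          case True thus ?thesis by (simp add: pmult_gen[OF F] fd_aut(3)[OF F cP])
        next
          case False
          have "phi_of Phi R x \<circ> c = c \<circ> phi_of Phi R x"
          proof -
            have "phi_of Phi R x \<in> Phi" using fd_rep_of(2)[OF F] False by blast
            moreover have "\<forall>g\<in>Phi. c \<circ> g = g \<circ> c" using c unfolding centre_def by blast
            ultimately show ?thesis by simp
          qed
          thus ?thesis using False by (simp add: pmult_gen[OF F] fun_eq_iff)
        qed
      qed
      fix a b
      show "?L (c r) (a + b) = ?L (c r) a + ?L (c r) b"
        unfolding e using addD[OF r_D] fd_aut(2)[OF F cP] by simp
    qed
    thus "c \<in> {f \<in> Phi. f r \<in> ?D}" using cP by blast
  qed
  show ?thesis unfolding r_def[symmetric] using sub cen by (rule conjI)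
qed

end
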